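(* Let $\mathcal{N}$ be a closed chemical reaction network, $\{\omega^1,\dots,\omega^d\}$ a reduced basis of $\Gamma^\perp$, $\widetilde f_\kappa$ the associated extended rate function, and $\kappa^o$, $g_{\kappa^o}$ as in the context. Then for each $c$, the determinant $\det(J_c(\widetilde f_\kappa))$, viewed as a polynomial in the rate constants $(k_{y\to y'})_{y\to y'\in\mathcal{R}}$, coincides with the sum of the terms of total degree $s$ (in these rate constants) in the expansion of $(-1)^d\det(J_c(g_{\kappa^o}))$.
   Context: A chemical reaction network $\mathcal{N}=(\mathcal{S},\mathcal{C},\mathcal{R})$ consists of a finite set of species $\mathcal{S}=\{S_1,\dots,S_n\}$, a finite set of complexes $\mathcal{C}\subset\mathbb{Z}_{\ge 0}^n$ (species $S_i$ identified with the $i$-th standard basis vector; the zero complex allowed), and a finite set of reactions $\mathcal{R}\subset\mathcal{C}\times\mathcal{C}$, written $y\to y'$, with $y\ne y'$. A rate vector is $\kappa=(k_{y\to y'})\in\mathbb{R}_+^{\mathcal{R}}$ ($\mathbb{R}_+$ the positive reals); the mass-action species formation rate function is $f_\kappa(c)=\sum_{y\to y'\in\mathcal{R}}k_{y\to y'}c^y(y'-y)$, $c^y=\prod_i c_i^{y_i}$, components $f_{\kappa,i}$. The stoichiometric subspace is $\Gamma=\mathrm{span}\{y'-y:y\to y'\in\mathcal{R}\}$, $s=\dim\Gamma$, $d=n-s$; closed means $\Gamma\ne\mathbb{R}^n$. A basis $\{\omega^1,\dots,\omega^d\}$ of $\Gamma^\perp$ with $\omega^i=(\lambda^i_1,\dots,\lambda^i_n)$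 is reduced if $\lambda^i_i=1$ and $\lambda^i_j=0$ for $j\in\{1,\dots,d\}$, $j\ne i$ (species assumed ordered so one exists). The extended rate function is $\widetilde f_\kappa(c)=(\omega^1\cdot c,\dots,\omega^d\cdot c,f_{\kappa,d+1}(c),\dots,f_{\kappa,n}(c))$; $J_c$ denotes the Jacobian at $c$. Let $\mathcal{O}(\mathcal{N})=\{i:S_i\to 0\notin\mathcal{R}\}$ and $\mathcal{N}^o$ the fully open network with reactions $\mathcal{R}\cup\{S_i\to 0:i=1,\dots,n\}$. The rate vector $\kappa^o$ of $\mathcal{N}^o$ agrees with $\kappa$ on $\mathcal{R}$ and has $k_{S_i\to 0}=1$ for $i\in\mathcal{O}(\mathcal{N})$; $g_{\kappa^o}(c)=f_\kappa(c)-(\delta_1c_1,\dots,\delta_nc_n)$ is the species formation rate function of $\mathcal{N}^o$ with rate vector $\kappa^o$, where $\delta_i=1$ if $i\in\mathcal{O}(\mathcal{N})$ and $0$ otherwise. *)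

theory Defs
  imports Complex_Main "HOL-Library.Function_Algebras" "HOL-Analysis.Derivative" "Jordan_Normal_Form.Determinant"
begin

(* Species are indexed 0..n-1 (the paper's S_1..S_n); a complex is a vector in Z_{>=0}^n,
   represented as a function nat => nat that vanishes outside {..<n}.
   A reaction y -> y' is the pair (y, y'). *)
type_synonym cplx = "nat \<Rightarrow> nat"
type_synonym reaction = "cplx \<times> cplx"

(* real vector space structure on nat => real (vectors of R^n are those vanishing at i >= n) *)
definition fscale :: "real \<Rightarrow> (nat \<Rightarrow> real) \<Rightarrow> (nat \<Rightarrow> real)" where
  "fscale r f = (\<lambda>i. r * f i)"

global_interpretation fvs: vector_space fscale
  by unfold_locales (auto simp: fscale_def fun_eq_iff algebra_simps)

definition Rn :: "nat \<Rightarrow> (nat \<Rightarrow> real) set" where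
  "Rn n = {v. \<forall>i\<ge>n. v i = 0}"

definition crn :: "nat \<Rightarrow> reaction set \<Rightarrow> bool" where
  "crn n R \<longleftrightarrow> finite R \<and> (\<forall>(y, y')\<in>R. y \<noteq> y' \<and> (\<forall>i\<ge>n. y i = 0 \<and> y' i = 0))"

definition reaction_vec :: "reaction \<Rightarrow> (nat \<Rightarrow> real)" where
  "reaction_vec r = (\<lambda>i. real (snd r i) - real (fst r i))"

definition stoich_space :: "reaction set \<Rightarrow> (nat \<Rightarrow> real) set" where
  "stoich_space R = fvs.span (reaction_vec ` R)"

definition stoich_dim :: "reaction set \<Rightarrow> nat" where
  "stoich_dim R = fvs.dim (stoich_space R)"

definition stoich_perp :: "nat \<Rightarrow> reaction set \<Rightarrow> (nat \<Rightarrow> real) set" where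
  "stoich_perp n R = {w \<in> Rn n. \<forall>v\<in>stoich_space R. (\<Sum>i<n. w i * v i) = 0}"

(* omega 0, ..., omega (d-1) (paper: omega^1..omega^d) is a reduced basis of Gamma^perp,
   d = n - s *)
definition reduced_basis :: "nat \<Rightarrow> reaction set \<Rightarrow> (nat \<Rightarrow> nat \<Rightarrow> real) \<Rightarrow> bool" where
  "reduced_basis n R \<omega> \<longleftrightarrow>
     (let d = n - stoich_dim R in
        (\<forall>i<d. \<omega> i \<in> stoich_perp n R) \<and> inj_on \<omega> {..<d} \<and>
        fvs.independent (\<omega> ` {..<d}) \<and> fvs.span (\<omega> ` {..<d}) = stoich_perp n R \<and>
        (\<forall>i<d. \<forall>j<d. \<omega> i j = (if i = j then 1 else 0)))"

definition rate_fun :: "nat \<Rightarrow> reaction set \<Rightarrow> (reaction \<Rightarrow> real) \<Rightarrow> (nat \<Rightarrow> real) \<Rightarrow> nat \<Rightarrow> real" where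
  "rate_fun n R \<kappa> c i = (\<Sum>r\<in>R. \<kappa> r * (\<Prod>j<n. c j ^ fst r j) * reaction_vec r i)"

definition ext_rate :: "nat \<Rightarrow> reaction set \<Rightarrow> (nat \<Rightarrow> nat \<Rightarrow> real) \<Rightarrow> (reaction \<Rightarrow> real) \<Rightarrow> (nat \<Rightarrow> real) \<Rightarrow> nat \<Rightarrow> real" where
  "ext_rate n R \<omega> \<kappa> c i =
     (if i < n - stoich_dim R then (\<Sum>j<n. \<omega> i j * c j) else rate_fun n R \<kappa> c i)"

definition outflow :: "nat \<Rightarrow> reaction" where
  "outflow i = ((\<lambda>j. if j = i then 1 else 0), (\<lambda>_. 0))"

definition open_set :: "nat \<Rightarrow> reaction set \<Rightarrow> nat set" where
  "open_set n R = {i. i < n \<and> outflow i \<notin> R}"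

definition open_rate :: "nat \<Rightarrow> reaction set \<Rightarrow> (reaction \<Rightarrow> real) \<Rightarrow> (nat \<Rightarrow> real) \<Rightarrow> nat \<Rightarrow> real" where
  "open_rate n R \<kappa> c i = rate_fun n R \<kappa> c i - (if i \<in> open_set n R then c i else 0)"

definition jac :: "nat \<Rightarrow> ((nat \<Rightarrow> real) \<Rightarrow> nat \<Rightarrow> real) \<Rightarrow> (nat \<Rightarrow> real) \<Rightarrow> real mat" where
  "jac n F c = mat n n (\<lambda>(i, j). deriv (\<lambda>t. F (c(j := t)) i) (c j))"

(* Polynomials in the rate constants (k_r)_{r in R} with real coefficients: a coefficient
   function on monomials m (exponent vectors, zero outside R) with finite support. *)
definition poly_in_rates :: "reaction set \<Rightarrow> ((reaction \<Rightarrow> nat) \<Rightarrow> real) \<Rightarrow> bool" where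
  "poly_in_rates R P \<longleftrightarrow> finite {m. P m \<noteq> 0} \<and> (\<forall>m. P m \<noteq> 0 \<longrightarrow> (\<forall>r. r \<notin> R \<longrightarrow> m r = 0))"

definition eval_rates :: "reaction set \<Rightarrow> ((reaction \<Rightarrow> nat) \<Rightarrow> real) \<Rightarrow> (reaction \<Rightarrow> real) \<Rightarrow> real" where
  "eval_rates R P \<kappa> = (\<Sum>m | P m \<noteq> 0. P m * (\<Prod>r\<in>R. \<kappa> r ^ m r))"

definition poly_rep :: "reaction set \<Rightarrow> ((reaction \<Rightarrow> nat) \<Rightarrow> real) \<Rightarrow> ((reaction \<Rightarrow> real) \<Rightarrow> real) \<Rightarrow> bool" where
  "poly_rep R P F \<longleftrightarrow> poly_in_rates R P \<and> (\<forall>\<kappa>. (\<forall>r\<in>R. \<kappa> r > 0) \<longrightarrow> F \<kappa> = eval_rates R P \<kappa>)"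

definition total_degree :: "reaction set \<Rightarrow> (reaction \<Rightarrow> nat) \<Rightarrow> nat" where
  "total_degree R m = (\<Sum>r\<in>R. m r)"

definition homog_part :: "reaction set \<Rightarrow> nat \<Rightarrow> ((reaction \<Rightarrow> nat) \<Rightarrow> real) \<Rightarrow> ((reaction \<Rightarrow> nat) \<Rightarrow> real)" where
  "homog_part R k P = (\<lambda>m. if total_degree R m = k then P m else 0)"

end

theory Submission
  imports Defs
begin


definition rmono :: "reaction set \<Rightarrow> (reaction \<Rightarrow> nat) \<Rightarrow> (reaction \<Rightarrow> real) \<Rightarrow> real" where
  "rmono R m \<kappa> = (\<Prod>r\<in>R. \<kappa> r ^ m r)"

lemma univ_zero:
  fixes b :: "'a \<Rightarrow> real" and e :: "'a \<Rightarrow> nat"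
  assumes A: "finite A" and z: "\<forall>t>0. (\<Sum>m\<in>A. b m * t ^ e m) = 0"
  shows "(\<Sum>m\<in>{m\<in>A. e m = k}. b m) = 0"
proof -
  define p where "p = (\<Sum>m\<in>A. monom (b m) (e m))"
  have ev: "poly p t = (\<Sum>m\<in>A. b m * t ^ e m)" for t
    unfolding p_def by (simp add: poly_sum poly_monom)
  have "p = 0"
  proof (rule ccontr)
    assume "p \<noteq> 0"
    then have "finite {x. poly p x = 0}" by (rule poly_roots_finite)
    moreover have "{0<..} \<subseteq> {x. poly p x = 0}" using z ev by auto
    ultimately have "finite ({0<..} :: real set)" by (rule finite_subset[rotated])
    then show False using infinite_Ioi[of "0::real"] by simp
  qed
  then have "coeff p k = 0" by simp
  moreover have "coeff p k = (\<Sum>m\<in>A. if e m = k then b m else 0)"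
    unfolding p_def by (simp add: coeff_sum coeff_monom)
  moreover have "(\<Sum>m\<in>A. if e m = k then b m else 0) = (\<Sum>m\<in>{m\<in>A. e m = k}. b m)"
    using A by (simp add: sum.inter_filter)
  ultimately show ?thesis by simp
qed

lemma mv_zero:
  assumes "finite V"
  shows "finite A \<Longrightarrow> (\<forall>m\<in>A. \<forall>r. r \<notin> V \<longrightarrow> m r = 0) \<Longrightarrow>
    (\<forall>\<kappa>. (\<forall>r\<in>V. \<kappa> r > 0) \<longrightarrow> (\<Sum>m\<in>A. c m * (\<Prod>r\<in>V. \<kappa> r ^ m r)) = (0::real)) \<Longrightarrow>
    \<forall>m\<in>A. c m = 0"
  using assms
proof (induction V arbitrary: A c rule: finite_induct)
  case empty
  then have A: "A \<subseteq> {\<lambda>_. 0}" by auto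
  show ?case
  proof
    fix m assume m: "m \<in> A"
    with A have "A = {m}" "m = (\<lambda>_. 0)" by auto
    then have "(\<Sum>m\<in>A. c m * (\<Prod>r\<in>{}. (\<lambda>_. 1::real) r ^ m r)) = c m" by simp
    moreover have "(\<Sum>m\<in>A. c m * (\<Prod>r\<in>{}. (\<lambda>_. 1::real) r ^ m r)) = 0"
      using empty(3)[rule_format, of "\<lambda>_. 1"] by simp
    ultimately show "c m = 0" by simp
  qed
next
  case (insert r V)
  show ?case
  proof
    fix m0 assume m0: "m0 \<in> A"
    define k where "k = m0 r"
    define A' where "A' = {m\<in>A. m r = k}"
    define B where "B = (\<lambda>m. m(r:=0)) ` A'"
    define c' where "c' = (\<lambda>m'. c (m'(r:=k)))"
    have finA': "finite A'" using insert.prems(1) unfolding A'_def by simp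
    thm insert.prems insert
    have inj: "inj_on (\<lambda>m. m(r:=0)) A'"
    proof (rule inj_onI)
      fix x y assume "x \<in> A'" "y \<in> A'" "x(r:=0) = y(r:=0)"
      then show "x = y" unfolding A'_def
      proof (intro ext)
        fix z assume a: "x \<in> {m \<in> A. m r = k}" "y \<in> {m \<in> A. m r = k}" "x(r:=0) = y(r:=0)"
        show "x z = y z"
        proof (cases "z = r")
          case True then show ?thesis using a by simp
        next
          case False then show ?thesis using fun_cong[OF a(3), of z] by simp
        qed
      qed
    qed
    have prodV: "(\<Prod>x\<in>V. \<kappa> x ^ (m(r:=0)) x) = (\<Prod>x\<in>V. \<kappa> x ^ m x)" for \<kappa> and m
      using insert(2) by (intro prod.cong) auto
    have zB: "\<forall>\<kappa>. (\<forall>x\<in>V. \<kappa> x > 0) \<longrightarrow> (\<Sum>m'\<in>B. c' m' * (\<Prod>x\<in>V. \<kappa> x ^ m' x)) = 0"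
    proof (intro allI impI)
      fix \<kappa> :: "'a \<Rightarrow> real" assume pos: "\<forall>x\<in>V. \<kappa> x > 0"
      show "(\<Sum>m'\<in>B. c' m' * (\<Prod>x\<in>V. \<kappa> x ^ m' x)) = 0"
    proof -
      have z: "\<forall>t>0. (\<Sum>m\<in>A. (c m * (\<Prod>x\<in>V. \<kappa> x ^ m x)) * t ^ m r) = 0"
      proof (intro allI impI)
        fix t :: real assume t: "t > 0"
        have hp: "\<forall>x\<in>insert r V. (\<kappa>(r:=t)) x > 0" using pos t by auto
        have imp: "(\<forall>x\<in>insert r V. (\<kappa>(r:=t)) x > 0) \<longrightarrow> (\<Sum>m\<in>A. c m * (\<Prod>x\<in>insert r V. (\<kappa>(r:=t)) x ^ m x)) = 0"
          using insert.prems(3) by (rule spec)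
        have z0: "(\<Sum>m\<in>A. c m * (\<Prod>x\<in>insert r V. (\<kappa>(r:=t)) x ^ m x)) = 0"
          using imp hp by (rule mp)
        have pe: "(\<Prod>x\<in>insert r V. (\<kappa>(r:=t)) x ^ m x) = t ^ m r * (\<Prod>x\<in>V. \<kappa> x ^ m x)" for m
        proof -
          have "(\<Prod>x\<in>insert r V. (\<kappa>(r:=t)) x ^ m x) = t ^ m r * (\<Prod>x\<in>V. (\<kappa>(r:=t)) x ^ m x)"
            using insert(1,2) by simp
          also have "(\<Prod>x\<in>V. (\<kappa>(r:=t)) x ^ m x) = (\<Prod>x\<in>V. \<kappa> x ^ m x)"
            using insert(2) by (intro prod.cong) auto
          finally show ?thesis .
        qed
        have "(\<Sum>m\<in>A. c m * (\<Prod>x\<in>insert r V. (\<kappa>(r:=t)) x ^ m x)) = (\<Sum>m\<in>A. (c m * (\<Prod>x\<in>V. \<kappa> x ^ m x)) * t ^ m r)"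
          by (rule sum.cong[OF refl]) (simp only: pe mult_ac)
        with z0 show "(\<Sum>m\<in>A. (c m * (\<Prod>x\<in>V. \<kappa> x ^ m x)) * t ^ m r) = 0"
          by simp
      qed
      have "(\<Sum>m\<in>A'. c m * (\<Prod>x\<in>V. \<kappa> x ^ m x)) = 0"
        using univ_zero[OF insert(4) z, of k] unfolding A'_def .
      moreover have "(\<Sum>m'\<in>B. c' m' * (\<Prod>x\<in>V. \<kappa> x ^ m' x)) = (\<Sum>m\<in>A'. c m * (\<Prod>x\<in>V. \<kappa> x ^ m x))"
        unfolding B_def
        apply (subst sum.reindex[OF inj])
        apply (unfold comp_def)
        apply (rule sum.cong[OF refl])
        apply (unfold c'_def prodV fun_upd_upd)
        apply (simp add: A'_def fun_upd_idem)
        done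
      ultimately show ?thesis by simp
    qed
    qed
    have finB: "finite B" using finA' unfolding B_def by simp
    have suppB: "\<forall>m\<in>B. \<forall>x. x \<notin> V \<longrightarrow> m x = 0"
    proof (intro ballI allI impI)
      fix m x assume mB: "m \<in> B" and xV: "x \<notin> V"
      then obtain m' where m': "m' \<in> A" "m = m'(r:=0)" unfolding B_def A'_def by blast
      show "m x = 0"
      proof (cases "x = r")
        case True then show ?thesis using m' by simp
      next
        case False
        then have "x \<notin> insert r V" using xV by simp
        then have "m' x = 0" using insert.prems(2) m'(1) by blast
        then show ?thesis using m' False by simp
      qed
    qed
    have "\<forall>m\<in>B. c' m = 0" by (rule insert.IH[OF finB suppB zB])
    moreover have "m0(r:=0) \<in> B" using m0 unfolding B_def A'_def k_def by auto
    ultimately have "c' (m0(r:=0)) = 0" by blast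
    then show "c m0 = 0" unfolding c'_def k_def by simp
  qed
qed

lemma eval_rates_superset:
  assumes "finite A" "{m. P m \<noteq> 0} \<subseteq> A"
  shows "eval_rates R P \<kappa> = (\<Sum>m\<in>A. P m * rmono R m \<kappa>)"
  unfolding eval_rates_def rmono_def
  by (rule sum.mono_neutral_left) (use assms in auto)

lemma poly_unique:
  assumes R: "finite R" and P1: "poly_in_rates R P1" and P2: "poly_in_rates R P2"
    and eq: "\<forall>\<kappa>. (\<forall>r\<in>R. \<kappa> r > 0) \<longrightarrow> eval_rates R P1 \<kappa> = eval_rates R P2 \<kappa>"
  shows "P1 = P2"
proof -
  define A where "A = {m. P1 m \<noteq> 0} \<union> {m. P2 m \<noteq> 0}"
  have f1: "finite {m. P1 m \<noteq> 0}" using P1 unfolding poly_in_rates_def by blast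
  have f2: "finite {m. P2 m \<noteq> 0}" using P2 unfolding poly_in_rates_def by blast
  have fA: "finite A" unfolding A_def using f1 f2 by (rule finite_UnI)
  have s1: "\<forall>m. P1 m \<noteq> 0 \<longrightarrow> (\<forall>r. r \<notin> R \<longrightarrow> m r = 0)" using P1 unfolding poly_in_rates_def by blast
  have s2: "\<forall>m. P2 m \<noteq> 0 \<longrightarrow> (\<forall>r. r \<notin> R \<longrightarrow> m r = 0)" using P2 unfolding poly_in_rates_def by blast
  have supp: "\<forall>m\<in>A. \<forall>r. r \<notin> R \<longrightarrow> m r = 0"
  proof (intro ballI allI impI)
    fix m r assume "m \<in> A" "r \<notin> R"
    then show "m r = 0" using s1 s2 unfolding A_def by blast
  qed
  have sA1: "{m. P1 m \<noteq> 0} \<subseteq> A" unfolding A_def by (rule Un_upper1)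
  have sA2: "{m. P2 m \<noteq> 0} \<subseteq> A" unfolding A_def by (rule Un_upper2)
  have "\<forall>\<kappa>. (\<forall>r\<in>R. \<kappa> r > 0) \<longrightarrow> (\<Sum>m\<in>A. (P1 m - P2 m) * (\<Prod>r\<in>R. \<kappa> r ^ m r)) = 0"
  proof (intro allI impI)
    fix \<kappa> :: "reaction \<Rightarrow> real" assume pos: "\<forall>r\<in>R. \<kappa> r > 0"
    have "eval_rates R P1 \<kappa> = eval_rates R P2 \<kappa>" using mp[OF spec[OF eq, of \<kappa>] pos] .
    moreover have "eval_rates R P1 \<kappa> = (\<Sum>m\<in>A. P1 m * rmono R m \<kappa>)"
      by (rule eval_rates_superset[OF fA sA1])
    moreover have "eval_rates R P2 \<kappa> = (\<Sum>m\<in>A. P2 m * rmono R m \<kappa>)"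
      by (rule eval_rates_superset[OF fA sA2])
    ultimately have "(\<Sum>m\<in>A. P1 m * rmono R m \<kappa>) = (\<Sum>m\<in>A. P2 m * rmono R m \<kappa>)" by simp
    then show "(\<Sum>m\<in>A. (P1 m - P2 m) * (\<Prod>r\<in>R. \<kappa> r ^ m r)) = 0"
      unfolding rmono_def by (simp add: left_diff_distrib sum_subtractf)
  qed
  from mv_zero[OF R fA supp this] have eqA: "\<forall>m\<in>A. P1 m = P2 m" by simp
  show ?thesis
  proof (rule ext)
    fix m show "P1 m = P2 m"
    proof (cases "m \<in> A")
      case True with eqA show ?thesis by blast
    next
      case False then show ?thesis unfolding A_def by simp
    qed
  qed
qed



definition lpoly :: "reaction set \<Rightarrow> ((reaction \<Rightarrow> real) \<Rightarrow> real) \<Rightarrow> bool" where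
  "lpoly R F \<longleftrightarrow> (\<exists>L. (\<forall>p\<in>set L. \<forall>r. r \<notin> R \<longrightarrow> fst p r = 0) \<and>
      (\<forall>\<kappa>. F \<kappa> = (\<Sum>p\<leftarrow>L. snd p * rmono R (fst p) \<kappa>)))"

lemma lpoly_const: "lpoly R (\<lambda>\<kappa>. a)"
  unfolding lpoly_def by (rule exI[of _ "[(\<lambda>_. 0, a)]"]) (simp add: rmono_def)

lemma lpoly_var:
  assumes "finite R" "r \<in> R"
  shows "lpoly R (\<lambda>\<kappa>. \<kappa> r)"
proof -
  have "rmono R (\<lambda>x. if x = r then 1 else 0) \<kappa> = \<kappa> r" for \<kappa>
  proof -
    have "rmono R (\<lambda>x. if x = r then 1 else 0) \<kappa> = (\<Prod>x\<in>R. if x = r then \<kappa> x else 1)"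
      unfolding rmono_def by (intro prod.cong) auto
    also have "\<dots> = \<kappa> r" using assms by (simp add: prod.delta')
    finally show ?thesis .
  qed
  then show ?thesis unfolding lpoly_def using assms
    by (intro exI[of _ "[(\<lambda>x. if x = r then 1 else 0, 1)]"]) auto
qed

lemma lpoly_add: "lpoly R F \<Longrightarrow> lpoly R G \<Longrightarrow> lpoly R (\<lambda>\<kappa>. F \<kappa> + G \<kappa>)"
  unfolding lpoly_def
  by (elim exE conjE, rename_tac L1 L2, rule_tac x="L1 @ L2" in exI) auto

lemma sum_list_mult_comp:
  fixes f g :: "_ \<Rightarrow> real"
  shows "(\<Sum>x\<leftarrow>L1. f x) * (\<Sum>y\<leftarrow>L2. g y) = (\<Sum>z\<leftarrow>concat (map (\<lambda>x. map (\<lambda>y. (x, y)) L2) L1). f (fst z) * g (snd z))"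
  by (induction L1) (simp_all add: distrib_right sum_list_const_mult o_def)

lemma rmono_add: "rmono R (\<lambda>r. m1 r + m2 r) \<kappa> = rmono R m1 \<kappa> * rmono R m2 \<kappa>"
  unfolding rmono_def by (simp add: power_add prod.distrib)

lemma lpoly_mult: "lpoly R F \<Longrightarrow> lpoly R G \<Longrightarrow> lpoly R (\<lambda>\<kappa>. F \<kappa> * G \<kappa>)"
proof -
  assume "lpoly R F" "lpoly R G"
  then obtain L1 L2 where L1: "\<forall>p\<in>set L1. \<forall>r. r \<notin> R \<longrightarrow> fst p r = 0" "\<forall>\<kappa>. F \<kappa> = (\<Sum>p\<leftarrow>L1. snd p * rmono R (fst p) \<kappa>)"
    and L2: "\<forall>p\<in>set L2. \<forall>r. r \<notin> R \<longrightarrow> fst p r = 0" "\<forall>\<kappa>. G \<kappa> = (\<Sum>p\<leftarrow>L2. snd p * rmono R (fst p) \<kappa>)"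
    unfolding lpoly_def by blast
  define L where "L = map (\<lambda>z. (\<lambda>r. fst (fst z) r + fst (snd z) r, snd (fst z) * snd (snd z)))
     (concat (map (\<lambda>x. map (\<lambda>y. (x, y)) L2) L1))"
  have "F \<kappa> * G \<kappa> = (\<Sum>p\<leftarrow>L. snd p * rmono R (fst p) \<kappa>)" for \<kappa>
    unfolding L1(2)[rule_format] L2(2)[rule_format] sum_list_mult_comp L_def
    by (simp add: rmono_add o_def ac_simps)
  moreover have "\<forall>p\<in>set L. \<forall>r. r \<notin> R \<longrightarrow> fst p r = 0"
    using L1(1) L2(1) unfolding L_def by auto
  ultimately show ?thesis unfolding lpoly_def by blast
qed

lemma lpoly_sum: "(\<And>i. i \<in> I \<Longrightarrow> lpoly R (F i)) \<Longrightarrow> lpoly R (\<lambda>\<kappa>. \<Sum>i\<in>I. F i \<kappa>)"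
proof (induction I rule: infinite_finite_induct)
  case (infinite A) then show ?case by (simp add: lpoly_const)
next
  case empty then show ?case by (simp add: lpoly_const)
next
  case (insert x F) then show ?case by (simp add: lpoly_add)
qed

lemma lpoly_prod: "(\<And>i. i \<in> I \<Longrightarrow> lpoly R (F i)) \<Longrightarrow> lpoly R (\<lambda>\<kappa>. \<Prod>i\<in>I. F i \<kappa>)"
proof (induction I rule: infinite_finite_induct)
  case (infinite A) then show ?case by (simp add: lpoly_const)
next
  case empty then show ?case by (simp add: lpoly_const)
next
  case (insert x F) then show ?case by (simp add: lpoly_mult)
qed

lemma lpoly_diff: "lpoly R F \<Longrightarrow> lpoly R G \<Longrightarrow> lpoly R (\<lambda>\<kappa>. F \<kappa> - G \<kappa>)"
proof -
  assume "lpoly R F" "lpoly R G"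
  then have "lpoly R (\<lambda>\<kappa>. F \<kappa> + (-1) * G \<kappa>)" by (intro lpoly_add lpoly_mult lpoly_const)
  then show ?thesis by simp
qed

lemma lpoly_rep_aux:
  assumes "finite A" "fst ` set L \<subseteq> A"
  shows "(\<Sum>m\<in>A. (\<Sum>p\<leftarrow>L. if fst p = m then snd p else 0) * rmono R m \<kappa>) = (\<Sum>p\<leftarrow>L. snd p * rmono R (fst p) \<kappa>)"
  using assms(2)
proof (induction L)
  case Nil then show ?case by simp
next
  case (Cons p L)
  have IH: "(\<Sum>m\<in>A. (\<Sum>q\<leftarrow>L. if fst q = m then snd q else 0) * rmono R m \<kappa>) = (\<Sum>q\<leftarrow>L. snd q * rmono R (fst q) \<kappa>)"
    using Cons.prems by (intro Cons.IH) simp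
  have pA: "fst p \<in> A" using Cons.prems by simp
  have "(\<Sum>m\<in>A. (\<Sum>q\<leftarrow>p # L. if fst q = m then snd q else 0) * rmono R m \<kappa>)
     = (\<Sum>m\<in>A. (if fst p = m then snd p * rmono R m \<kappa> else 0) + (\<Sum>q\<leftarrow>L. if fst q = m then snd q else 0) * rmono R m \<kappa>)"
    by (rule sum.cong) (simp_all add: distrib_right)
  also have "\<dots> = (\<Sum>m\<in>A. (if fst p = m then snd p * rmono R m \<kappa> else 0)) + (\<Sum>m\<in>A. (\<Sum>q\<leftarrow>L. if fst q = m then snd q else 0) * rmono R m \<kappa>)"
    by (rule sum.distrib)
  also have "(\<Sum>m\<in>A. (if fst p = m then snd p * rmono R m \<kappa> else 0)) = snd p * rmono R (fst p) \<kappa>"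
    using pA assms(1) by (simp add: sum.delta)
  finally show ?case using IH by simp
qed

lemma sum_list_nz: "(\<Sum>p\<leftarrow>L. f p) \<noteq> (0::real) \<Longrightarrow> \<exists>p\<in>set L. f p \<noteq> 0"
  by (induction L) auto

lemma lpoly_rep:
  assumes "lpoly R F"
  shows "\<exists>P. poly_rep R P F"
proof -
  obtain L where L: "\<forall>p\<in>set L. \<forall>r. r \<notin> R \<longrightarrow> fst p r = 0" "\<forall>\<kappa>. F \<kappa> = (\<Sum>p\<leftarrow>L. snd p * rmono R (fst p) \<kappa>)"
    using assms unfolding lpoly_def by blast
  define P where "P = (\<lambda>m. \<Sum>p\<leftarrow>L. if fst p = m then snd p else 0)"
  have supp: "{m. P m \<noteq> 0} \<subseteq> fst ` set L"
  proof
    fix m assume "m \<in> {m. P m \<noteq> 0}"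
    then have "(\<Sum>p\<leftarrow>L. if fst p = m then snd p else 0) \<noteq> 0" unfolding P_def by simp
    then obtain p where "p \<in> set L" "fst p = m"
      using sum_list_nz[where L=L and f="\<lambda>p. if fst p = m then snd p else 0"] by (auto split: if_splits)
    then show "m \<in> fst ` set L" by force
  qed
  have "finite {m. P m \<noteq> 0}" by (rule finite_subset[OF supp]) simp
  moreover have "\<forall>m. P m \<noteq> 0 \<longrightarrow> (\<forall>r. r \<notin> R \<longrightarrow> m r = 0)"
  proof (intro allI impI)
    fix m r assume "P m \<noteq> 0" "r \<notin> R"
    then have "m \<in> fst ` set L" using supp by blast
    then obtain p where p: "p \<in> set L" "m = fst p" by blast
    have "fst p r = 0" using mp[OF spec[OF bspec[OF L(1) p(1)], of r] \<open>r \<notin> R\<close>] .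
    then show "m r = 0" using p(2) by simp
  qed
  ultimately have "poly_in_rates R P"
    unfolding poly_in_rates_def by blast
  moreover have "F \<kappa> = eval_rates R P \<kappa>" for \<kappa>
    by (subst eval_rates_superset[OF _ supp]) (simp_all add: P_def lpoly_rep_aux L(2))
  ultimately show ?thesis unfolding poly_rep_def by blast
qed



lemma sum_apply_fun: "(\<Sum>a\<in>A. f a) x = (\<Sum>a\<in>A. f a x)"
  by (induction A rule: infinite_finite_induct) auto

lemma stoich_dim_le:
  assumes "crn n R"
  shows "stoich_dim R \<le> n"
proof -
  define e where "e = (\<lambda>i::nat. \<lambda>k::nat. if k = i then (1::real) else 0)"
  define E where "E = e ` {..<n}"
  have rv: "reaction_vec r \<in> fvs.span E" if r: "r \<in> R" for r
  proof -
    obtain y y' where yy: "r = (y, y')" by (cases r)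
    have zero: "\<forall>i\<ge>n. y i = 0 \<and> y' i = 0" using assms r yy unfolding crn_def by auto
    have eq: "reaction_vec r = (\<Sum>i<n. fscale (reaction_vec r i) (e i))"
    proof (rule ext)
      fix k
      have "(\<Sum>i<n. fscale (reaction_vec r i) (e i)) k = (\<Sum>i<n. reaction_vec r i * e i k)"
        by (simp add: sum_apply_fun fscale_def)
      also have "\<dots> = (\<Sum>i<n. if i = k then reaction_vec r i else 0)"
        by (rule sum.cong) (auto simp: e_def)
      also have "\<dots> = (if k < n then reaction_vec r k else 0)" by (simp add: sum.delta)
      also have "\<dots> = reaction_vec r k"
        using zero yy by (auto simp: reaction_vec_def)
      finally show "reaction_vec r k = (\<Sum>i<n. fscale (reaction_vec r i) (e i)) k" by simp
    qed
    have "(\<Sum>i<n. fscale (reaction_vec r i) (e i)) \<in> fvs.span E"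
      by (rule fvs.span_sum, rule fvs.span_scale, rule fvs.span_base) (simp add: E_def)
    then show ?thesis using eq by simp
  qed
  have "stoich_space R \<subseteq> fvs.span E"
    unfolding stoich_space_def
    by (rule fvs.span_minimal) (use rv in auto)
  then have "fvs.dim (stoich_space R) \<le> card E"
    by (rule fvs.dim_le_card) (simp add: E_def)
  also have "card E \<le> n" unfolding E_def using card_image_le[of "{..<n}" e] by simp
  finally show ?thesis unfolding stoich_dim_def .
qed

lemma diff_prod:
  fixes f :: "'i \<Rightarrow> real \<Rightarrow> real"
  shows "(\<And>i. i \<in> I \<Longrightarrow> f i differentiable at x within S) \<Longrightarrow> (\<lambda>x. \<Prod>i\<in>I. f i x) differentiable at x within S"
proof (induction I rule: infinite_finite_induct)
  case (infinite A) then show ?case by simp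
next
  case empty then show ?case by simp
next
  case (insert a A)
  have fa: "f a differentiable at x within S" using insert.prems by simp
  have fA: "(\<lambda>x. \<Prod>i\<in>A. f i x) differentiable at x within S" by (rule insert.IH) (use insert.prems in simp)
  show ?case using insert.hyps by (simp add: differentiable_mult[OF fa fA])
qed

definition gfun :: "nat \<Rightarrow> (nat \<Rightarrow> real) \<Rightarrow> nat \<Rightarrow> cplx \<Rightarrow> real \<Rightarrow> real" where
  "gfun n c j y = (\<lambda>x. \<Prod>l<n. (c(j:=x)) l ^ y l)"

definition acoef :: "nat \<Rightarrow> (nat \<Rightarrow> real) \<Rightarrow> reaction \<Rightarrow> nat \<Rightarrow> real" where
  "acoef n c r j = deriv (gfun n c j (fst r)) (c j)"

definition Mf :: "nat \<Rightarrow> reaction set \<Rightarrow> (nat \<Rightarrow> real) \<Rightarrow> (reaction \<Rightarrow> real) \<Rightarrow> nat \<Rightarrow> nat \<Rightarrow> real" where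
  "Mf n R c \<kappa> i j = (\<Sum>r\<in>R. \<kappa> r * acoef n c r j * reaction_vec r i)"

lemma gfun_deriv: "(gfun n c j y has_real_derivative deriv (gfun n c j y) x) (at x)"
proof -
  have "gfun n c j y differentiable at x"
    unfolding gfun_def
  proof (rule diff_prod)
    fix l
    show "(\<lambda>x. (c(j := x)) l ^ y l) differentiable at x"
    proof (cases "l = j")
      case True then show ?thesis by simp
    next
      case False then show ?thesis by simp
    qed
  qed
  then show ?thesis by (simp add: DERIV_deriv_iff_real_differentiable)
qed

lemma deriv_rate:
  "deriv (\<lambda>t. rate_fun n R \<kappa> (c(j:=t)) i) (c j) = Mf n R c \<kappa> i j"
proof -
  have fe: "(\<lambda>t. rate_fun n R \<kappa> (c(j:=t)) i) = (\<lambda>t. \<Sum>r\<in>R. \<kappa> r * gfun n c j (fst r) t * reaction_vec r i)"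
    unfolding rate_fun_def gfun_def by simp
  have "((\<lambda>t. \<Sum>r\<in>R. \<kappa> r * gfun n c j (fst r) t * reaction_vec r i) has_real_derivative
      (\<Sum>r\<in>R. \<kappa> r * acoef n c r j * reaction_vec r i)) (at (c j))"
    unfolding acoef_def
    by (intro DERIV_sum DERIV_cmult DERIV_cmult_right gfun_deriv)
  then show ?thesis unfolding fe Mf_def by (rule DERIV_imp_deriv)
qed

lemma deriv_lin:
  fixes w c :: "nat \<Rightarrow> real"
  assumes "j < n"
  shows "deriv (\<lambda>t. \<Sum>l<n. w l * (c(j:=t)) l) (c j) = w j"
proof -
  have "((\<lambda>t. \<Sum>l<n. w l * (c(j:=t)) l) has_real_derivative (\<Sum>l<n. if l = j then w l else 0)) (at (c j))"
  proof (intro DERIV_sum)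
    fix l
    show "((\<lambda>t. w l * (c(j:=t)) l) has_real_derivative (if l = j then w l else 0)) (at (c j))"
    proof (cases "l = j")
      case True
      then have "(\<lambda>t. w l * (c(j:=t)) l) = (\<lambda>t. w l * t)" by auto
      then show ?thesis using True by (auto intro!: derivative_eq_intros)
    next
      case False
      then have "(\<lambda>t. w l * (c(j:=t)) l) = (\<lambda>t. w l * c l)" by auto
      then show ?thesis using False by (auto intro!: derivative_eq_intros)
    qed
  qed
  moreover have "(\<Sum>l<n. if l = j then w l else 0) = w j" using assms by (simp add: sum.delta')
  ultimately show ?thesis by (simp add: DERIV_imp_deriv)
qed

lemma deriv_open:
  "deriv (\<lambda>t. open_rate n R \<kappa> (c(j:=t)) i) (c j) = Mf n R c \<kappa> i j - (if i \<in> open_set n R \<and> i = j then 1 else 0)"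
proof -
  have fe: "(\<lambda>t. open_rate n R \<kappa> (c(j:=t)) i) = (\<lambda>t. (\<Sum>r\<in>R. \<kappa> r * gfun n c j (fst r) t * reaction_vec r i) - (if i \<in> open_set n R then (c(j:=t)) i else 0))"
    unfolding open_rate_def rate_fun_def gfun_def by simp
  have d2: "((\<lambda>t. if i \<in> open_set n R then (c(j:=t)) i else 0) has_real_derivative (if i \<in> open_set n R \<and> i = j then 1 else 0)) (at (c j))"
  proof (cases "i \<in> open_set n R \<and> i = j")
    case True
    then have "(\<lambda>t. if i \<in> open_set n R then (c(j:=t)) i else 0) = (\<lambda>t. t)" by auto
    then show ?thesis using True by (auto intro!: derivative_eq_intros)
  next
    case False
    then have "(\<lambda>t. if i \<in> open_set n R then (c(j:=t)) i else 0) = (\<lambda>t. if i \<in> open_set n R then c i else 0)" by auto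
    then show ?thesis using False by (auto intro!: derivative_eq_intros)
  qed
  have "((\<lambda>t. (\<Sum>r\<in>R. \<kappa> r * gfun n c j (fst r) t * reaction_vec r i) - (if i \<in> open_set n R then (c(j:=t)) i else 0)) has_real_derivative
      (\<Sum>r\<in>R. \<kappa> r * acoef n c r j * reaction_vec r i) - (if i \<in> open_set n R \<and> i = j then 1 else 0)) (at (c j))"
    unfolding acoef_def
    by (intro DERIV_diff DERIV_sum DERIV_cmult DERIV_cmult_right gfun_deriv d2)
  then show ?thesis unfolding fe Mf_def by (rule DERIV_imp_deriv)
qed

lemma jac_open:
  "jac n (open_rate n R \<kappa>) c = mat n n (\<lambda>(i,j). Mf n R c \<kappa> i j - (if i \<in> open_set n R \<and> i = j then 1 else 0))"
  unfolding jac_def by (rule cong_mat) (simp_all add: deriv_open)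

lemma jac_ext:
  "jac n (ext_rate n R \<omega> \<kappa>) c = mat n n (\<lambda>(i,j). if i < n - stoich_dim R then \<omega> i j else Mf n R c \<kappa> i j)"
  unfolding jac_def
proof (rule cong_mat)
  fix i j assume ij: "i < n" "j < n"
  show "(case (i, j) of (i, j) \<Rightarrow> deriv (\<lambda>t. ext_rate n R \<omega> \<kappa> (c(j := t)) i) (c j)) =
        (case (i, j) of (i, j) \<Rightarrow> if i < n - stoich_dim R then \<omega> i j else Mf n R c \<kappa> i j)"
  proof (cases "i < n - stoich_dim R")
    case True
    then have "(\<lambda>t. ext_rate n R \<omega> \<kappa> (c(j := t)) i) = (\<lambda>t. \<Sum>l<n. \<omega> i l * (c(j:=t)) l)"
      unfolding ext_rate_def by simp
    moreover have "deriv (\<lambda>t. \<Sum>l<n. \<omega> i l * (c(j:=t)) l) (c j) = \<omega> i j" by (rule deriv_lin[OF ij(2)])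
    ultimately show ?thesis using True by (simp del: fun_upd_apply)
  next
    case False
    then have "(\<lambda>t. ext_rate n R \<omega> \<kappa> (c(j := t)) i) = (\<lambda>t. rate_fun n R \<kappa> (c(j:=t)) i)"
      unfolding ext_rate_def by simp
    then show ?thesis using False by (simp del: fun_upd_apply add: deriv_rate)
  qed
qed simp_all



lemma det_mat:
  "det (mat n n f) = (\<Sum>p\<in>{p. p permutes {0..<n}}. signof p * (\<Prod>i=0..<n. f (i, p i)))"
proof -
  have "det (mat n n f) = (\<Sum>p\<in>{p. p permutes {0..<n}}. signof p * (\<Prod>i=0..<n. mat n n f $$ (i, p i)))"
    by (rule det_def') simp
  also have "\<dots> = (\<Sum>p\<in>{p. p permutes {0..<n}}. signof p * (\<Prod>i=0..<n. f (i, p i)))"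
  proof (rule sum.cong[OF refl])
    fix p assume "p \<in> {p. p permutes {0..<n}}"
    then have p: "p permutes {0..<n}" by simp
    have "(\<Prod>i=0..<n. mat n n f $$ (i, p i)) = (\<Prod>i=0..<n. f (i, p i))"
    proof (rule prod.cong[OF refl])
      fix i assume i: "i \<in> {0..<n}"
      then have "p i \<in> {0..<n}" using permutes_in_image[OF p] by simp
      then show "mat n n f $$ (i, p i) = f (i, p i)" using i by simp
    qed
    then show "signof p * (\<Prod>i=0..<n. mat n n f $$ (i, p i)) = signof p * (\<Prod>i=0..<n. f (i, p i))" by simp
  qed
  finally show ?thesis .
qed

lemma prod_split3:
  fixes x y :: "nat \<Rightarrow> real"
  assumes N: "finite N" and US: "U \<subseteq> S" and SN: "S \<subseteq> N"
  shows "(\<Prod>i\<in>N. if i \<in> U then x i else y i) = (\<Prod>i\<in>U. x i) * (\<Prod>i\<in>S-U. y i) * (\<Prod>i\<in>N-S. y i)"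
proof -
  define h where "h = (\<lambda>i. if i \<in> U then x i else y i)"
  have fS: "finite S" using N SN by (rule finite_subset[rotated])
  have 1: "(\<Prod>i\<in>N. h i) = (\<Prod>i\<in>N-S. h i) * (\<Prod>i\<in>S. h i)" by (rule prod.subset_diff[OF SN N])
  have 2: "(\<Prod>i\<in>S. h i) = (\<Prod>i\<in>S-U. h i) * (\<Prod>i\<in>U. h i)" by (rule prod.subset_diff[OF US fS])
  have 3: "(\<Prod>i\<in>N-S. h i) = (\<Prod>i\<in>N-S. y i)" using US by (intro prod.cong) (auto simp: h_def)
  have 4: "(\<Prod>i\<in>S-U. h i) = (\<Prod>i\<in>S-U. y i)" by (intro prod.cong) (auto simp: h_def)
  have 5: "(\<Prod>i\<in>U. h i) = (\<Prod>i\<in>U. x i)" by (intro prod.cong) (auto simp: h_def)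
  show ?thesis unfolding h_def[symmetric] 1 2 3 4 5 by (simp add: mult_ac)
qed

lemma prod_affine:
  fixes x y :: "nat \<Rightarrow> real"
  assumes N: "finite N" and SN: "S \<subseteq> N"
  shows "(\<Prod>i\<in>N. if i \<in> S then t * x i + y i else y i) = (\<Sum>U\<in>Pow S. t ^ card U * (\<Prod>i\<in>N. if i \<in> U then x i else y i))"
proof -
  define h where "h = (\<lambda>i. if i \<in> S then t * x i + y i else y i)"
  have fS: "finite S" using N SN by (rule finite_subset[rotated])
  have "(\<Prod>i\<in>N. h i) = (\<Prod>i\<in>N-S. h i) * (\<Prod>i\<in>S. h i)" by (rule prod.subset_diff[OF SN N])
  also have "(\<Prod>i\<in>N-S. h i) = (\<Prod>i\<in>N-S. y i)" by (intro prod.cong) (auto simp: h_def)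
  also have "(\<Prod>i\<in>S. h i) = (\<Prod>i\<in>S. t * x i + y i)" by (intro prod.cong) (auto simp: h_def)
  also have "\<dots> = (\<Sum>U\<in>Pow S. (\<Prod>i\<in>U. t * x i) * (\<Prod>i\<in>S-U. y i))" by (rule prod_add[OF fS])
  also have "(\<Prod>i\<in>N-S. y i) * \<dots> = (\<Sum>U\<in>Pow S. (\<Prod>i\<in>N-S. y i) * ((\<Prod>i\<in>U. t * x i) * (\<Prod>i\<in>S-U. y i)))"
    by (rule sum_distrib_left)
  also have "\<dots> = (\<Sum>U\<in>Pow S. t ^ card U * (\<Prod>i\<in>N. if i \<in> U then x i else y i))"
  proof (rule sum.cong[OF refl])
    fix U assume "U \<in> Pow S"
    then have US: "U \<subseteq> S" by simp
    have "(\<Prod>i\<in>U. t * x i) = t ^ card U * (\<Prod>i\<in>U. x i)" by (simp add: prod.distrib)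
    then show "(\<Prod>i\<in>N-S. y i) * ((\<Prod>i\<in>U. t * x i) * (\<Prod>i\<in>S-U. y i)) = t ^ card U * (\<Prod>i\<in>N. if i \<in> U then x i else y i)"
      unfolding prod_split3[OF N US SN] by (simp add: mult_ac)
  qed
  finally show ?thesis unfolding h_def .
qed

lemma det_affine:
  fixes X Y :: "nat \<Rightarrow> nat \<Rightarrow> real"
  assumes SN: "S \<subseteq> {0..<n}"
  shows "det (mat n n (\<lambda>(i,j). if i \<in> S then t * X i j + Y i j else Y i j)) =
    (\<Sum>U\<in>Pow S. t ^ card U * det (mat n n (\<lambda>(i,j). if i \<in> U then X i j else Y i j)))"
proof -
  let ?P = "{p. p permutes {0..<n}}"
  have "det (mat n n (\<lambda>(i,j). if i \<in> S then t * X i j + Y i j else Y i j)) =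
      (\<Sum>p\<in>?P. signof p * (\<Prod>i=0..<n. if i \<in> S then t * X i (p i) + Y i (p i) else Y i (p i)))"
    by (simp add: det_mat)
  also have "\<dots> = (\<Sum>p\<in>?P. signof p * (\<Sum>U\<in>Pow S. t ^ card U * (\<Prod>i=0..<n. if i \<in> U then X i (p i) else Y i (p i))))"
    by (subst prod_affine[OF _ SN]) simp_all
  also have "\<dots> = (\<Sum>p\<in>?P. \<Sum>U\<in>Pow S. t ^ card U * (signof p * (\<Prod>i=0..<n. if i \<in> U then X i (p i) else Y i (p i))))"
    by (simp add: sum_distrib_left mult_ac)
  also have "\<dots> = (\<Sum>U\<in>Pow S. \<Sum>p\<in>?P. t ^ card U * (signof p * (\<Prod>i=0..<n. if i \<in> U then X i (p i) else Y i (p i))))"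
    by (rule sum.swap)
  also have "\<dots> = (\<Sum>U\<in>Pow S. t ^ card U * det (mat n n (\<lambda>(i,j). if i \<in> U then X i j else Y i j)))"
    by (simp add: det_mat sum_distrib_left)
  finally show ?thesis .
qed

lemma prod_neg_rows:
  fixes f g :: "nat \<Rightarrow> real"
  shows "(\<Prod>i=0..<n. if i < d then - f i else g i) = (-1) ^ min d n * (\<Prod>i=0..<n. if i < d then f i else g i)"
proof (induction n)
  case 0 then show ?case by simp
next
  case (Suc n)
  show ?case
  proof (cases "n < d")
    case True
    then have "min d (Suc n) = Suc (min d n)" by simp
    then show ?thesis using Suc True by simp
  next
    case False
    then have "min d (Suc n) = min d n" by simp
    then show ?thesis using Suc False by simp
  qed
qed

lemma det_neg_rows:
  fixes A B :: "nat \<Rightarrow> nat \<Rightarrow> real"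
  assumes "d \<le> n"
  shows "det (mat n n (\<lambda>(i,j). if i < d then - A i j else B i j)) = (-1) ^ d * det (mat n n (\<lambda>(i,j). if i < d then A i j else B i j))"
proof -
  have md: "min d n = d" using assms by simp
  have "(\<Sum>p\<in>{p. p permutes {0..<n}}. signof p * (\<Prod>i=0..<n. if i < d then - A i (p i) else B i (p i)))
     = (\<Sum>p\<in>{p. p permutes {0..<n}}. (-1) ^ d * (signof p * (\<Prod>i=0..<n. if i < d then A i (p i) else B i (p i))))"
  proof (rule sum.cong[OF refl])
    fix p
    have "(\<Prod>i=0..<n. if i < d then - A i (p i) else B i (p i)) = (-1) ^ d * (\<Prod>i=0..<n. if i < d then A i (p i) else B i (p i))"
      using prod_neg_rows[where f="\<lambda>i. A i (p i)" and g="\<lambda>i. B i (p i)" and d=d and n=n] md by simp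
    then show "signof p * (\<Prod>i=0..<n. if i < d then - A i (p i) else B i (p i)) = (-1) ^ d * (signof p * (\<Prod>i=0..<n. if i < d then A i (p i) else B i (p i)))"
      by simp
  qed
  then show ?thesis by (simp add: det_mat sum_distrib_left)
qed

lemma mult_mat_index:
  fixes f g :: "nat \<times> nat \<Rightarrow> real"
  assumes "i < n" "j < n"
  shows "(mat n n f * mat n n g) $$ (i,j) = (\<Sum>k<n. f (i,k) * g (k,j))"
  using assms by (simp add: scalar_prod_def atLeast0LessThan)

lemma prod_list_ones: "\<forall>x\<in>set xs. f x = 1 \<Longrightarrow> prod_list (map f xs) = (1::real)"
  by (induction xs) auto

lemma det_T:
  fixes \<omega> :: "nat \<Rightarrow> nat \<Rightarrow> real"
  assumes red: "\<forall>i<d. \<forall>j<d. \<omega> i j = (if i = j then 1 else 0)"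
  shows "det (mat n n (\<lambda>(i,j). if i < d then \<omega> i j else (if i = j then 1 else 0))) = 1"
proof -
  let ?T = "mat n n (\<lambda>(i,j). if i < d then \<omega> i j else (if i = j then 1 else 0)) :: real mat"
  have ut: "upper_triangular ?T"
    unfolding upper_triangular_def
  proof (intro allI impI)
    fix i j assume "i < dim_row ?T" "j < i"
    then show "?T $$ (i,j) = 0" using red by auto
  qed
  have "det ?T = prod_list (diag_mat ?T)" by (rule det_upper_triangular[OF ut]) (rule mat_carrier)
  also have "\<dots> = 1" unfolding diag_mat_def
    by (rule prod_list_ones) (use red in auto)
  finally show ?thesis .
qed



lemma univ_eq:
  fixes b :: "'a \<Rightarrow> real" and e :: "'a \<Rightarrow> nat" and b' :: "'b \<Rightarrow> real" and e' :: "'b \<Rightarrow> nat"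
  assumes A: "finite A" and B: "finite B" and z: "\<forall>t>0. (\<Sum>m\<in>A. b m * t ^ e m) = (\<Sum>m\<in>B. b' m * t ^ e' m)"
  shows "(\<Sum>m\<in>{m\<in>A. e m = k}. b m) = (\<Sum>m\<in>{m\<in>B. e' m = k}. b' m)"
proof -
  define p where "p = (\<Sum>m\<in>A. monom (b m) (e m)) - (\<Sum>m\<in>B. monom (b' m) (e' m))"
  have ev: "poly p t = (\<Sum>m\<in>A. b m * t ^ e m) - (\<Sum>m\<in>B. b' m * t ^ e' m)" for t
    unfolding p_def by (simp add: poly_sum poly_monom)
  have "p = 0"
  proof (rule ccontr)
    assume "p \<noteq> 0"
    then have "finite {x. poly p x = 0}" by (rule poly_roots_finite)
    moreover have "{0<..} \<subseteq> {x. poly p x = 0}"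
    proof
      fix t :: real assume "t \<in> {0<..}"
      then have "(\<Sum>m\<in>A. b m * t ^ e m) = (\<Sum>m\<in>B. b' m * t ^ e' m)" using z by simp
      then show "t \<in> {x. poly p x = 0}" using ev[of t] by simp
    qed
    ultimately have "finite ({0<..} :: real set)" by (rule finite_subset[rotated])
    then show False using infinite_Ioi[of "0::real"] by simp
  qed
  then have "coeff p k = 0" by simp
  moreover have "coeff p k = (\<Sum>m\<in>A. if e m = k then b m else 0) - (\<Sum>m\<in>B. if e' m = k then b' m else 0)"
    unfolding p_def by (simp add: coeff_sum coeff_monom coeff_diff)
  moreover have "(\<Sum>m\<in>A. if e m = k then b m else 0) = (\<Sum>m\<in>{m\<in>A. e m = k}. b m)"
    using A by (simp add: sum.inter_filter)
  moreover have "(\<Sum>m\<in>B. if e' m = k then b' m else 0) = (\<Sum>m\<in>{m\<in>B. e' m = k}. b' m)"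
    using B by (simp add: sum.inter_filter)
  ultimately show ?thesis by simp
qed

lemma rmono_scale: "rmono R m (\<lambda>r. t * \<kappa> r) = t ^ total_degree R m * rmono R m \<kappa>"
  unfolding rmono_def total_degree_def by (simp add: power_mult_distrib prod.distrib power_sum)

lemma Mf_scale: "Mf n R c (\<lambda>r. t * \<kappa> r) i j = t * Mf n R c \<kappa> i j"
  unfolding Mf_def by (simp add: sum_distrib_left mult_ac)

lemma perp_M:
  assumes w: "w \<in> stoich_perp n R"
  shows "(\<Sum>k<n. w k * Mf n R c \<kappa> k j) = 0"
proof -
  have z: "(\<Sum>k<n. w k * reaction_vec r k) = 0" if "r \<in> R" for r
  proof -
    have "reaction_vec r \<in> stoich_space R" unfolding stoich_space_def
      by (rule fvs.span_base) (use that in simp)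
    then show ?thesis using w unfolding stoich_perp_def by blast
  qed
  have "(\<Sum>k<n. w k * Mf n R c \<kappa> k j) = (\<Sum>k<n. \<Sum>r\<in>R. (\<kappa> r * acoef n c r j) * (w k * reaction_vec r k))"
    unfolding Mf_def by (simp add: sum_distrib_left mult_ac)
  also have "\<dots> = (\<Sum>r\<in>R. \<Sum>k<n. (\<kappa> r * acoef n c r j) * (w k * reaction_vec r k))" by (rule sum.swap)
  also have "\<dots> = (\<Sum>r\<in>R. (\<kappa> r * acoef n c r j) * (\<Sum>k<n. w k * reaction_vec r k))"
    by (simp add: sum_distrib_left)
  also have "\<dots> = 0" using z by simp
  finally show ?thesis .
qed

lemma perp_outflow:
  assumes w: "w \<in> stoich_perp n R" and j: "j < n" "j \<notin> open_set n R"
  shows "w j = 0"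
proof -
  have r: "outflow j \<in> R" using j unfolding open_set_def by simp
  have "reaction_vec (outflow j) \<in> stoich_space R" unfolding stoich_space_def
    by (rule fvs.span_base) (use r in simp)
  then have "(\<Sum>k<n. w k * reaction_vec (outflow j) k) = 0" using w unfolding stoich_perp_def by blast
  moreover have "(\<Sum>k<n. w k * reaction_vec (outflow j) k) = (\<Sum>k<n. if k = j then - w k else 0)"
    by (rule sum.cong) (auto simp: reaction_vec_def outflow_def)
  moreover have "(\<Sum>k<n. if k = j then - w k else 0) = - w j" using j by (simp add: sum.delta')
  ultimately show ?thesis by simp
qed



definition dl :: "nat \<Rightarrow> reaction set \<Rightarrow> nat \<Rightarrow> nat \<Rightarrow> real" where
  "dl n R i j = (if i \<in> open_set n R \<and> i = j then 1 else 0)"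

lemma TG:
  assumes perp: "\<forall>i<d. \<omega> i \<in> stoich_perp n R"
  shows "mat n n (\<lambda>(i,j). if i < d then \<omega> i j else (if i = j then 1 else 0)) *
           mat n n (\<lambda>(i,j). Mf n R c \<kappa> i j - dl n R i j)
       = mat n n (\<lambda>(i,j). if i < d then - \<omega> i j else Mf n R c \<kappa> i j - dl n R i j)"
proof (rule eq_matI)
  fix i j assume ij: "i < dim_row (mat n n (\<lambda>(i,j). if i < d then - \<omega> i j else Mf n R c \<kappa> i j - dl n R i j))"
    "j < dim_col (mat n n (\<lambda>(i,j). if i < d then - \<omega> i j else Mf n R c \<kappa> i j - dl n R i j))"
  then have i: "i < n" and j: "j < n" by auto
  have "(mat n n (\<lambda>(i,j). if i < d then \<omega> i j else (if i = j then 1 else 0)) *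
           mat n n (\<lambda>(i,j). Mf n R c \<kappa> i j - dl n R i j)) $$ (i,j)
     = (\<Sum>k<n. (if i < d then \<omega> i k else (if i = k then 1 else 0)) * (Mf n R c \<kappa> k j - dl n R k j))"
    by (subst mult_mat_index[OF i j]) simp
  also have "\<dots> = (if i < d then - \<omega> i j else Mf n R c \<kappa> i j - dl n R i j)"
  proof (cases "i < d")
    case True
    have wp: "\<omega> i \<in> stoich_perp n R" using perp True by simp
    have "(\<Sum>k<n. \<omega> i k * (Mf n R c \<kappa> k j - dl n R k j)) = (\<Sum>k<n. \<omega> i k * Mf n R c \<kappa> k j) - (\<Sum>k<n. \<omega> i k * dl n R k j)"
      by (simp add: right_diff_distrib sum_subtractf)
    also have "(\<Sum>k<n. \<omega> i k * Mf n R c \<kappa> k j) = 0" by (rule perp_M[OF wp])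
    also have "(\<Sum>k<n. \<omega> i k * dl n R k j) = (\<Sum>k<n. if k = j then (if j \<in> open_set n R then \<omega> i j else 0) else 0)"
      by (rule sum.cong) (auto simp: dl_def)
    also have "\<dots> = (if j \<in> open_set n R then \<omega> i j else 0)" using j by (simp add: sum.delta')
    also have "0 - (if j \<in> open_set n R then \<omega> i j else 0) = - \<omega> i j"
      using perp_outflow[OF wp j] by auto
    finally show ?thesis using True by simp
  next
    case False
    have "(\<Sum>k<n. (if i = k then 1 else 0) * (Mf n R c \<kappa> k j - dl n R k j)) = (\<Sum>k<n. if k = i then Mf n R c \<kappa> i j - dl n R i j else 0)"
      by (rule sum.cong) auto
    also have "\<dots> = Mf n R c \<kappa> i j - dl n R i j" using i by (simp add: sum.delta')
    finally show ?thesis using False by simp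
  qed
  also have "\<dots> = mat n n (\<lambda>(i,j). if i < d then - \<omega> i j else Mf n R c \<kappa> i j - dl n R i j) $$ (i,j)"
    using i j by simp
  finally show "(mat n n (\<lambda>(i,j). if i < d then \<omega> i j else (if i = j then 1 else 0)) *
           mat n n (\<lambda>(i,j). Mf n R c \<kappa> i j - dl n R i j)) $$ (i,j) =
        mat n n (\<lambda>(i,j). if i < d then - \<omega> i j else Mf n R c \<kappa> i j - dl n R i j) $$ (i,j)" .
qed auto

lemma det_open_T:
  assumes perp: "\<forall>i<d. \<omega> i \<in> stoich_perp n R"
    and red: "\<forall>i<d. \<forall>j<d. \<omega> i j = (if i = j then 1 else 0)"
  shows "det (jac n (open_rate n R \<kappa>) c) = det (mat n n (\<lambda>(i,j). if i < d then - \<omega> i j else Mf n R c \<kappa> i j - dl n R i j))"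
proof -
  let ?T = "mat n n (\<lambda>(i,j). if i < d then \<omega> i j else (if i = j then 1 else 0)) :: real mat"
  let ?G = "mat n n (\<lambda>(i,j). Mf n R c \<kappa> i j - dl n R i j)"
  have G: "jac n (open_rate n R \<kappa>) c = ?G" unfolding jac_open dl_def by simp
  have "det (?T * ?G) = det ?T * det ?G" by (rule det_mult) auto
  also have "det ?T = 1" by (rule det_T[OF red])
  finally have "det ?G = det (?T * ?G)" by simp
  then show ?thesis unfolding G TG[OF perp] .
qed

lemma expand_open:
  assumes perp: "\<forall>i<d. \<omega> i \<in> stoich_perp n R"
    and red: "\<forall>i<d. \<forall>j<d. \<omega> i j = (if i = j then 1 else 0)"
  shows "det (jac n (open_rate n R (\<lambda>r. t * \<kappa> r)) c) =
    (\<Sum>U\<in>Pow {d..<n}. t ^ card U * det (mat n n (\<lambda>(i,j). if i \<in> U then Mf n R c \<kappa> i j else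
        (if i < d then - \<omega> i j else - dl n R i j))))"
proof -
  have "det (jac n (open_rate n R (\<lambda>r. t * \<kappa> r)) c) =
     det (mat n n (\<lambda>(i,j). if i < d then - \<omega> i j else t * Mf n R c \<kappa> i j - dl n R i j))"
  proof -
    have "mat n n (\<lambda>(i,j). if i < d then - \<omega> i j else Mf n R c (\<lambda>r. t * \<kappa> r) i j - dl n R i j)
       = mat n n (\<lambda>(i,j). if i < d then - \<omega> i j else t * Mf n R c \<kappa> i j - dl n R i j)"
      by (rule cong_mat) (auto simp: Mf_scale[of n R c t \<kappa>])
    then show ?thesis by (simp only: det_open_T[OF perp red])
  qed
  also have "mat n n (\<lambda>(i,j). if i < d then - \<omega> i j else t * Mf n R c \<kappa> i j - dl n R i j)
     = mat n n (\<lambda>(i,j). if i \<in> {d..<n} then t * Mf n R c \<kappa> i j + (if i < d then - \<omega> i j else - dl n R i j)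
          else (if i < d then - \<omega> i j else - dl n R i j))"
    by (rule cong_mat) auto
  also have "det \<dots> = (\<Sum>U\<in>Pow {d..<n}. t ^ card U * det (mat n n (\<lambda>(i,j). if i \<in> U then Mf n R c \<kappa> i j else
        (if i < d then - \<omega> i j else - dl n R i j))))"
    by (rule det_affine) auto
  finally show ?thesis .
qed

lemma top_coeff:
  assumes "d \<le> n" and that: "d = n - stoich_dim R"
  shows "det (mat n n (\<lambda>(i,j). if i \<in> {d..<n} then Mf n R c \<kappa> i j else
        (if i < d then - \<omega> i j else - dl n R i j))) =
     (-1) ^ d * det (jac n (ext_rate n R \<omega> \<kappa>) c)"
proof -
  have "mat n n (\<lambda>(i,j). if i \<in> {d..<n} then Mf n R c \<kappa> i j else (if i < d then - \<omega> i j else - dl n R i j))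
      = mat n n (\<lambda>(i,j). if i < d then - \<omega> i j else Mf n R c \<kappa> i j)"
    by (rule cong_mat) auto
  moreover have "det (mat n n (\<lambda>(i,j). if i < d then - \<omega> i j else Mf n R c \<kappa> i j))
      = (-1) ^ d * det (mat n n (\<lambda>(i,j). if i < d then \<omega> i j else Mf n R c \<kappa> i j))"
    by (rule det_neg_rows[OF assms(1)])
  ultimately show ?thesis unfolding jac_ext that by simp
qed



lemma lp_open:
  assumes fin: "finite R"
  shows "lpoly R (\<lambda>\<kappa>. det (jac n (open_rate n R \<kappa>) c))"
  unfolding jac_open det_mat case_prod_conv Mf_def
  apply (intro lpoly_sum lpoly_mult lpoly_const lpoly_prod lpoly_diff lpoly_var)
  apply (rule fin)
  apply assumption
  done

lemma key:
  assumes fin: "finite R" and sle: "stoich_dim R \<le> n"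
    and perp: "\<forall>i<n - stoich_dim R. \<omega> i \<in> stoich_perp n R"
    and red: "\<forall>i<n - stoich_dim R. \<forall>j<n - stoich_dim R. \<omega> i j = (if i = j then 1 else 0)"
    and Qrep: "poly_rep R Q (\<lambda>\<kappa>. det (jac n (open_rate n R \<kappa>) c))"
  shows "poly_rep R (homog_part R (stoich_dim R) (\<lambda>m. (-1) ^ (n - stoich_dim R) * Q m))
           (\<lambda>\<kappa>. det (jac n (ext_rate n R \<omega> \<kappa>) c))"
proof -
  define s where "s = stoich_dim R"
  define d where "d = n - s"
  define S where "S = {d..<n}"
  define supQ where "supQ = {m. Q m \<noteq> 0}"
  define H where "H = homog_part R s (\<lambda>m. (-1) ^ d * Q m)"
  have Qp: "poly_in_rates R Q" and Qe: "\<forall>\<kappa>. (\<forall>r\<in>R. \<kappa> r > 0) \<longrightarrow> det (jac n (open_rate n R \<kappa>) c) = eval_rates R Q \<kappa>"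
    using Qrep unfolding poly_rep_def by auto
  have fQ: "finite supQ" using Qp unfolding poly_in_rates_def supQ_def by blast
  have sQ: "\<forall>m. Q m \<noteq> 0 \<longrightarrow> (\<forall>r. r \<notin> R \<longrightarrow> m r = 0)" using Qp unfolding poly_in_rates_def by blast
  have Hsub: "{m. H m \<noteq> 0} \<subseteq> supQ" unfolding H_def homog_part_def supQ_def by auto
  have Hp: "poly_in_rates R H"
    unfolding poly_in_rates_def
  proof
    show "finite {m. H m \<noteq> 0}" using fQ Hsub by (rule finite_subset[rotated])
    show "\<forall>m. H m \<noteq> 0 \<longrightarrow> (\<forall>r. r \<notin> R \<longrightarrow> m r = 0)"
    proof (intro allI impI)
      fix m r assume "H m \<noteq> 0" "r \<notin> R"
      then have "Q m \<noteq> 0" using Hsub unfolding supQ_def by blast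
      then show "m r = 0" using mp[OF spec[OF mp[OF spec[OF sQ, of m]]] \<open>r \<notin> R\<close>] by simp
    qed
  qed
  have fS: "finite S" unfolding S_def by simp
  have cS: "card S = s" unfolding S_def d_def using sle s_def by simp
  have PS: "{U \<in> Pow S. card U = s} = {S}"
  proof
    show "{U \<in> Pow S. card U = s} \<subseteq> {S}"
    proof
      fix U assume "U \<in> {U \<in> Pow S. card U = s}"
      then have "U \<subseteq> S" "card U = card S" using cS by auto
      then have "U = S" using card_subset_eq[OF fS] by blast
      then show "U \<in> {S}" by simp
    qed
    show "{S} \<subseteq> {U \<in> Pow S. card U = s}" using cS by simp
  qed
  have perp': "\<forall>i<d. \<omega> i \<in> stoich_perp n R" using perp unfolding d_def s_def .
  have red': "\<forall>i<d. \<forall>j<d. \<omega> i j = (if i = j then 1 else 0)" using red unfolding d_def s_def .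
  have "det (jac n (ext_rate n R \<omega> \<kappa>) c) = eval_rates R H \<kappa>" if pos: "\<forall>r\<in>R. \<kappa> r > 0" for \<kappa>
  proof -
    define Dk where "Dk = (\<lambda>U. det (mat n n (\<lambda>(i,j). if i \<in> U then Mf n R c \<kappa> i j else
        (if i < d then - \<omega> i j else - dl n R i j))))"
    have z: "\<forall>t>0. (\<Sum>m\<in>supQ. (Q m * rmono R m \<kappa>) * t ^ total_degree R m) = (\<Sum>U\<in>Pow S. Dk U * t ^ card U)"
    proof (intro allI impI)
      fix t :: real assume t: "t > 0"
      have pt: "\<forall>r\<in>R. (\<lambda>r. t * \<kappa> r) r > 0" using pos t by simp
      have "(\<Sum>m\<in>supQ. (Q m * rmono R m \<kappa>) * t ^ total_degree R m) = (\<Sum>m\<in>supQ. Q m * rmono R m (\<lambda>r. t * \<kappa> r))"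
        by (simp add: rmono_scale mult_ac)
      also have "\<dots> = eval_rates R Q (\<lambda>r. t * \<kappa> r)"
        by (rule eval_rates_superset[symmetric]) (use fQ in \<open>simp_all add: supQ_def\<close>)
      also have "\<dots> = det (jac n (open_rate n R (\<lambda>r. t * \<kappa> r)) c)"
        using mp[OF spec[OF Qe, of "\<lambda>r. t * \<kappa> r"] pt] by simp
      also have "\<dots> = (\<Sum>U\<in>Pow S. t ^ card U * Dk U)"
        unfolding Dk_def S_def by (rule expand_open[OF perp' red'])
      finally show "(\<Sum>m\<in>supQ. (Q m * rmono R m \<kappa>) * t ^ total_degree R m) = (\<Sum>U\<in>Pow S. Dk U * t ^ card U)"
        by (simp add: mult_ac)
    qed
    have fP: "finite (Pow S)" using fS by simp
    have "(\<Sum>m\<in>{m\<in>supQ. total_degree R m = s}. Q m * rmono R m \<kappa>) = (\<Sum>U\<in>{U\<in>Pow S. card U = s}. Dk U)"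
      by (rule univ_eq[OF fQ fP z])
    also have "\<dots> = Dk S" unfolding PS by simp
    also have "\<dots> = (-1) ^ d * det (jac n (ext_rate n R \<omega> \<kappa>) c)"
      unfolding Dk_def S_def by (rule top_coeff) (simp_all add: d_def s_def)
    finally have eqs: "(\<Sum>m\<in>{m\<in>supQ. total_degree R m = s}. Q m * rmono R m \<kappa>) = (-1) ^ d * det (jac n (ext_rate n R \<omega> \<kappa>) c)" .
    have "eval_rates R H \<kappa> = (\<Sum>m\<in>supQ. H m * rmono R m \<kappa>)"
      by (rule eval_rates_superset[OF fQ Hsub])
    also have "\<dots> = (\<Sum>m\<in>supQ. if total_degree R m = s then (-1) ^ d * (Q m * rmono R m \<kappa>) else 0)"
      by (rule sum.cong) (simp_all add: H_def homog_part_def)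
    also have "\<dots> = (\<Sum>m\<in>{m\<in>supQ. total_degree R m = s}. (-1) ^ d * (Q m * rmono R m \<kappa>))"
      using fQ by (simp add: sum.inter_filter)
    also have "\<dots> = (-1) ^ d * ((-1) ^ d * det (jac n (ext_rate n R \<omega> \<kappa>) c))"
      by (simp add: sum_distrib_left[symmetric] eqs)
    also have "\<dots> = ((-1) * (-1)) ^ d * det (jac n (ext_rate n R \<omega> \<kappa>) c)"
      by (simp add: power_mult_distrib)
    also have "\<dots> = det (jac n (ext_rate n R \<omega> \<kappa>) c)" by simp
    finally show ?thesis by simp
  qed
  then show ?thesis using Hp unfolding poly_rep_def H_def d_def s_def by blast
qed

theorem corollary7p2:
  fixes n :: nat and R :: "reaction set" and \<omega> :: "nat \<Rightarrow> nat \<Rightarrow> real" and c :: "nat \<Rightarrow> real"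
  assumes network: "crn n R"
    and closed: "stoich_space R \<noteq> Rn n"
    and reduced: "reduced_basis n R \<omega>"
  shows "(\<exists>P. poly_rep R P (\<lambda>\<kappa>. det (jac n (ext_rate n R \<omega> \<kappa>) c)))
       \<and> (\<exists>Q. poly_rep R Q (\<lambda>\<kappa>. det (jac n (open_rate n R \<kappa>) c)))
       \<and> (\<forall>P Q. poly_rep R P (\<lambda>\<kappa>. det (jac n (ext_rate n R \<omega> \<kappa>) c))
              \<longrightarrow> poly_rep R Q (\<lambda>\<kappa>. det (jac n (open_rate n R \<kappa>) c))
              \<longrightarrow> P = homog_part R (stoich_dim R)
                        (\<lambda>m. (-1) ^ (n - stoich_dim R) * Q m))"
proof -
  have fin: "finite R" using network unfolding crn_def by simp
  have sle: "stoich_dim R \<le> n" by (rule stoich_dim_le[OF network])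
  have perp: "\<forall>i<n - stoich_dim R. \<omega> i \<in> stoich_perp n R"
    using reduced unfolding reduced_basis_def Let_def by blast
  have red: "\<forall>i<n - stoich_dim R. \<forall>j<n - stoich_dim R. \<omega> i j = (if i = j then 1 else 0)"
    using reduced unfolding reduced_basis_def Let_def by blast
  obtain Q0 where Q0: "poly_rep R Q0 (\<lambda>\<kappa>. det (jac n (open_rate n R \<kappa>) c))"
    using lpoly_rep[OF lp_open[OF fin]] by blast
  have c1: "\<exists>P. poly_rep R P (\<lambda>\<kappa>. det (jac n (ext_rate n R \<omega> \<kappa>) c))"
    using key[OF fin sle perp red Q0] by blast
  have c3: "P = homog_part R (stoich_dim R) (\<lambda>m. (-1) ^ (n - stoich_dim R) * Q m)"
    if P: "poly_rep R P (\<lambda>\<kappa>. det (jac n (ext_rate n R \<omega> \<kappa>) c))"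
      and Q: "poly_rep R Q (\<lambda>\<kappa>. det (jac n (open_rate n R \<kappa>) c))" for P Q
  proof -
    have H: "poly_rep R (homog_part R (stoich_dim R) (\<lambda>m. (-1) ^ (n - stoich_dim R) * Q m))
           (\<lambda>\<kappa>. det (jac n (ext_rate n R \<omega> \<kappa>) c))" by (rule key[OF fin sle perp red Q])
    show ?thesis
    proof (rule poly_unique[OF fin])
      show "poly_in_rates R P" using P unfolding poly_rep_def by blast
      show "poly_in_rates R (homog_part R (stoich_dim R) (\<lambda>m. (-1) ^ (n - stoich_dim R) * Q m))"
        using H unfolding poly_rep_def by blast
      show "\<forall>\<kappa>. (\<forall>r\<in>R. 0 < \<kappa> r) \<longrightarrow> eval_rates R P \<kappa> =
          eval_rates R (homog_part R (stoich_dim R) (\<lambda>m. (-1) ^ (n - stoich_dim R) * Q m)) \<kappa>"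
        using P H unfolding poly_rep_def by simp
    qed
  qed
  show ?thesis using c1 Q0 c3 by blast
qed


end
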